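(* Let $X$ be a real Banach space such that $\overline{\mathrm{Ext}\,B_{X^*}}^{w^*}\cap S_{X^*}$, with the weak$^*$ topology, is connected. Then there is no compact Hausdorff space $K$ and no U-embedding $T\colon X\to C(K)$.
   Context: For a linear isometry $T\colon X\to Y$ between Banach spaces, $T$ is a U-embedding if every $x^*\in X^*$ has a unique $y^*\in Y^*$ with $T^*(y^* )=x^*$ and $\|y^*\|=\|x^*\|$. $C(K)$ carries the sup norm; $\mathrm{Ext}\,B_{X^*}$ denotes the extreme points of the dual unit ball and $S_{X^*}$ the dual unit sphere. *)

theory Defs
  imports "HOL-Analysis.Analysis"
begin

text \<open>The dual space of X is represented by the type of bounded linear functionals
  'a => L real (blinfun) with the operator norm. The weak-star topology on it is the coarsest
  topology making all evaluations continuous, i.e. the pullback of the topology of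
  pointwise convergence (product topology on functions 'a \<Rightarrow> real).\<close>
definition weak_star_topology :: "('a::real_normed_vector \<Rightarrow>\<^sub>L real) topology" where
  "weak_star_topology =
     pullback_topology UNIV blinfun_apply (product_topology (\<lambda>_. euclideanreal) UNIV)"

definition U_embedding :: "('a::real_normed_vector \<Rightarrow> 'b::real_normed_vector) \<Rightarrow> bool" where
  "U_embedding T \<longleftrightarrow>
     linear T \<and> (\<forall>x. norm (T x) = norm x) \<and>
     (\<forall>xs :: 'a \<Rightarrow>\<^sub>L real. \<exists>!ys :: 'b \<Rightarrow>\<^sub>L real.
        (\<forall>x. blinfun_apply ys (T x) = blinfun_apply xs x) \<and> norm ys = norm xs)"

end

theory Submission
  imports Defs
begin

definition mkC :: "('k::topological_space \<Rightarrow> real) \<Rightarrow> ('k \<Rightarrow>\<^sub>C real)" where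
  "mkC f = Bcontfun f"

lemma mkC_apply:
  assumes "compact (UNIV::'k::topological_space set)" "continuous_on UNIV f"
  shows "apply_bcontfun (mkC f :: 'k \<Rightarrow>\<^sub>C real) = f"
  unfolding mkC_def
  apply (rule Bcontfun_inverse)
  using assms by (auto simp: bcontfun_def intro!: compact_imp_bounded compact_continuous_image)

definition oneC :: "'k::topological_space \<Rightarrow>\<^sub>C real" where "oneC = const_bcontfun 1"

lemma oneC_apply[simp]: "apply_bcontfun oneC x = 1"
  by (simp add: oneC_def)

lemma norm_oneC[simp]: "norm (oneC :: 'k::topological_space \<Rightarrow>\<^sub>C real) = 1"
proof (rule antisym)
  show "norm (oneC :: 'k \<Rightarrow>\<^sub>C real) \<le> 1" by (rule norm_bound) simp
  obtain x :: 'k where True by blast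
  show "1 \<le> norm (oneC :: 'k \<Rightarrow>\<^sub>C real)" using norm_bounded[of "oneC::'k \<Rightarrow>\<^sub>C real" x] by simp
qed

lemma blinfun_le: "(L::'b::real_normed_vector \<Rightarrow>\<^sub>L real) v \<le> norm L * norm v"
  using norm_blinfun[of L v] by simp

lemma abs_blinfun_le: "\<bar>(L::'b::real_normed_vector \<Rightarrow>\<^sub>L real) v\<bar> \<le> norm L * norm v"
  using norm_blinfun[of L v] by simp

lemma pos_functional:
  fixes G :: "('k::topological_space \<Rightarrow>\<^sub>C real) \<Rightarrow>\<^sub>L real"
  assumes "norm G \<le> 1" "G oneC = 1" "\<And>x. 0 \<le> apply_bcontfun w x"
  shows "0 \<le> G w"
proof -
  define c where "c = norm w"
  have "norm (c *\<^sub>R oneC - w) \<le> c"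
  proof (rule norm_bound)
    fix x
    have "w x \<le> c" using norm_bounded[of w x] c_def by simp
    then show "norm (apply_bcontfun (c *\<^sub>R oneC - w) x) \<le> c" using assms(3)[of x] by simp
  qed
  then have "G (c *\<^sub>R oneC - w) \<le> c"
    using blinfun_le[of G "c *\<^sub>R oneC - w"] assms(1) c_def
    by (smt (verit) mult_left_le_one_le norm_ge_zero)
  then show ?thesis using assms(2) by (simp add: blinfun.diff_right blinfun.scaleR_right)
qed

lemma ev_extreme:
  fixes G H :: "('k::topological_space \<Rightarrow>\<^sub>C real) \<Rightarrow>\<^sub>L real"
  assumes K: "compact (UNIV::'k set)"
    and G: "norm G \<le> 1" and H: "norm H \<le> 1" and u: "0 < u" "u < 1"
    and eq: "\<And>w. apply_bcontfun w k = (1-u) * G w + u * H w"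
  shows "G w = apply_bcontfun w k"
proof -
  have G1: "G oneC \<le> 1" using blinfun_le[of G oneC] G by simp
  have H1: "H oneC \<le> 1" using blinfun_le[of H oneC] H by simp
  have "1 = (1-u) * G oneC + u * H oneC" using eq[of oneC] by simp
  moreover have "(1-u) * G oneC \<le> (1-u)" using G1 u by (simp add: mult_left_le)
  moreover have "u * H oneC \<le> u" using H1 u by (simp add: mult_left_le)
  moreover have "(1-u) * G oneC < (1-u)" if "G oneC < 1" using that u by simp
  moreover have "u * H oneC < u" if "H oneC < 1" using that u by simp
  ultimately have G1': "G oneC = 1" and H1': "H oneC = 1" using G1 H1 by linarith+
  have zero: "G p = 0" if "\<And>x. 0 \<le> apply_bcontfun p x" "apply_bcontfun p k = 0" for p
  proof -
    have "0 \<le> G p" by (rule pos_functional[OF G G1' that(1)])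
    moreover have "0 \<le> H p" by (rule pos_functional[OF H H1' that(1)])
    moreover have "(1-u) * G p + u * H p = 0" using eq[of p] that(2) by simp
    ultimately show ?thesis using u
      by (smt (verit, best) mult_pos_pos mult_nonneg_nonneg)
  qed
  define p where "p = (mkC (\<lambda>x. max (w x - w k) 0) :: 'k \<Rightarrow>\<^sub>C real)"
  define n where "n = (mkC (\<lambda>x. max (w k - w x) 0) :: 'k \<Rightarrow>\<^sub>C real)"
  have pa: "apply_bcontfun p = (\<lambda>x. max (w x - w k) 0)"
    unfolding p_def by (rule mkC_apply[OF K]) (intro continuous_intros continuous_on_apply_bcontfun)
  have na: "apply_bcontfun n = (\<lambda>x. max (w k - w x) 0)"
    unfolding n_def by (rule mkC_apply[OF K]) (intro continuous_intros continuous_on_apply_bcontfun)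
  have wd: "w = w k *\<^sub>R oneC + p - n"
    by (rule bcontfun_eqI) (simp add: pa na)
  have "G w = w k * G oneC + G p - G n"
    by (subst wd) (simp add: blinfun.diff_right blinfun.add_right blinfun.scaleR_right)
  also have "G p = 0" by (rule zero) (auto simp: pa)
  also have "G n = 0" by (rule zero) (auto simp: na)
  finally show ?thesis using G1' by simp
qed

definition mulC :: "('k::topological_space \<Rightarrow>\<^sub>C real) \<Rightarrow> ('k \<Rightarrow>\<^sub>C real) \<Rightarrow> ('k \<Rightarrow>\<^sub>C real)" where
  "mulC h u = mkC (\<lambda>x. h x * u x)"

lemma mulC_apply:
  assumes "compact (UNIV::'k::topological_space set)"
  shows "apply_bcontfun (mulC h u :: 'k \<Rightarrow>\<^sub>C real) = (\<lambda>x. h x * u x)"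
  unfolding mulC_def by (rule mkC_apply[OF assms]) (intro continuous_intros continuous_on_apply_bcontfun)

lemma norm_mulC:
  assumes "compact (UNIV::'k::topological_space set)"
  shows "norm (mulC h u :: 'k \<Rightarrow>\<^sub>C real) \<le> norm h * norm u"
proof (rule norm_bound)
  fix x
  have "\<bar>h x\<bar> * \<bar>u x\<bar> \<le> norm h * norm u"
    using norm_bounded[of h x] norm_bounded[of u x] by (simp add: mult_mono')
  then show "norm (apply_bcontfun (mulC h u) x) \<le> norm h * norm u"
    by (simp add: mulC_apply[OF assms] abs_mult)
qed

lemma bounded_linear_mulC:
  assumes K: "compact (UNIV::'k::topological_space set)"
  shows "bounded_linear (\<lambda>u. mulC h u :: 'k \<Rightarrow>\<^sub>C real)"
proof (rule bounded_linear_intro[where K="norm h"])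
  fix x y :: "'k \<Rightarrow>\<^sub>C real" and r :: real
  show "mulC h (x + y) = mulC h x + mulC h y"
    by (rule bcontfun_eqI) (simp add: mulC_apply[OF K] algebra_simps)
  show "mulC h (r *\<^sub>R x) = r *\<^sub>R mulC h x"
    by (rule bcontfun_eqI) (simp add: mulC_apply[OF K] algebra_simps)
  show "norm (mulC h x) \<le> norm x * norm h"
    using norm_mulC[OF K, of h x] by (simp add: mult.commute)
qed

definition restrF :: "(('k::topological_space \<Rightarrow>\<^sub>C real) \<Rightarrow>\<^sub>L real) \<Rightarrow> ('k \<Rightarrow>\<^sub>C real) \<Rightarrow> (('k \<Rightarrow>\<^sub>C real) \<Rightarrow>\<^sub>L real)" where
  "restrF F h = Blinfun (\<lambda>u. F (mulC h u))"

lemma restrF_apply: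
  assumes K: "compact (UNIV::'k::topological_space set)"
  shows "blinfun_apply (restrF F h :: ('k \<Rightarrow>\<^sub>C real) \<Rightarrow>\<^sub>L real) u = F (mulC h u)"
  unfolding restrF_def
  by (subst bounded_linear_Blinfun_apply)
     (auto intro: bounded_linear_compose[OF blinfun.bounded_linear_right bounded_linear_mulC[OF K]])

lemma norm_approx:
  fixes L :: "'b::real_normed_vector \<Rightarrow>\<^sub>L real"
  assumes "0 < e"
  shows "\<exists>u. norm u \<le> 1 \<and> L u > norm L - e"
proof (rule ccontr)
  assume "\<not> ?thesis"
  then have A: "L u \<le> norm L - e" if "norm u \<le> 1" for u using that by force
  have b0: "0 \<le> norm L - e" using A[of 0] by simp
  have "norm L \<le> norm L - e"
  proof (rule norm_blinfun_bound[OF b0])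
    fix x
    show "norm (L x) \<le> (norm L - e) * norm x"
    proof (cases "x = 0")
      case True then show ?thesis by simp
    next
      case False
      define y where "y = x /\<^sub>R norm x"
      have ny: "norm y \<le> 1" "norm (-y) \<le> 1" using False by (auto simp: y_def)
      have "L y \<le> norm L - e" "L (-y) \<le> norm L - e" using A ny by auto
      then have "\<bar>L y\<bar> \<le> norm L - e" by (simp add: blinfun.minus_right)
      moreover have "L x = norm x * L y" using False
        by (simp add: y_def blinfun.scaleR_right)
      ultimately show ?thesis by (simp add: abs_mult mult.commute mult_left_mono)
    qed
  qed
  then show False using assms by simp
qed

lemma arith_aux: "(z::real) \<le> 1 \<Longrightarrow> z = x + y \<Longrightarrow> a - (a+b-1)/2 < x \<Longrightarrow> b - (a+b-1)/2 < y \<Longrightarrow> False"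
  by (simp add: field_simps)

definition extremeC :: "(('k::topological_space \<Rightarrow>\<^sub>C real) \<Rightarrow>\<^sub>L real) \<Rightarrow> bool" where
  "extremeC F \<longleftrightarrow> (\<forall>P Q a. 0 < a \<longrightarrow> a < 1 \<longrightarrow> norm P \<le> 1 \<longrightarrow> norm Q \<le> 1 \<longrightarrow>
      F = a *\<^sub>R P + (1-a) *\<^sub>R Q \<longrightarrow> P = F)"

lemma split_unit:
  fixes F :: "('k::topological_space \<Rightarrow>\<^sub>C real) \<Rightarrow>\<^sub>L real"
  assumes K: "compact (UNIV::'k set)" and nF: "norm F = 1" and E: "extremeC F"
    and h0: "\<And>x. 0 \<le> apply_bcontfun h x" and h1: "\<And>x. apply_bcontfun h x \<le> 1"
  shows "\<exists>c. \<forall>u. F (mulC h u) = c * F u"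
proof -
  define h' where "h' = (mkC (\<lambda>x. 1 - h x) :: 'k \<Rightarrow>\<^sub>C real)"
  have h'a: "apply_bcontfun h' = (\<lambda>x. 1 - h x)"
    unfolding h'_def by (rule mkC_apply[OF K]) (intro continuous_intros continuous_on_apply_bcontfun)
  define A where "A = restrF F h"
  define B where "B = restrF F h'"
  have Aa: "A u = F (mulC h u)" for u unfolding A_def by (rule restrF_apply[OF K])
  have Ba: "B u = F (mulC h' u)" for u unfolding B_def by (rule restrF_apply[OF K])
  have sumu: "mulC h u + mulC h' u = u" for u
    by (rule bcontfun_eqI) (simp add: mulC_apply[OF K] h'a algebra_simps)
  have FAB: "F = A + B"
    by (rule blinfun_eqI) (simp add: blinfun.add_left Aa Ba blinfun.add_right[symmetric] sumu)
  have ge: "1 \<le> norm A + norm B" using nF FAB norm_triangle_ineq[of A B] by simp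
  have le: "norm A + norm B \<le> 1"
  proof (rule ccontr)
    assume nle: "\<not> norm A + norm B \<le> 1"
    define e where "e = (norm A + norm B - 1) / 2"
    have e: "0 < e" using nle by (simp add: e_def)
    obtain u where u: "norm u \<le> 1" "A u > norm A - e" using norm_approx[OF e] by blast
    obtain v where v: "norm v \<le> 1" "B v > norm B - e" using norm_approx[OF e] by blast
    define w where "w = mulC h u + mulC h' v"
    have "norm w \<le> 1"
    proof (rule norm_bound)
      fix x
      have "\<bar>u x\<bar> \<le> 1" "\<bar>v x\<bar> \<le> 1" using norm_bounded[of u x] norm_bounded[of v x] u v by auto
      then have "\<bar>h x * u x\<bar> \<le> h x" "\<bar>(1 - h x) * v x\<bar> \<le> 1 - h x"
        using h0[of x] h1[of x] by (auto simp: abs_mult intro: mult_left_le)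
      then show "norm (apply_bcontfun w x) \<le> 1"
        by (simp add: w_def mulC_apply[OF K] h'a)
    qed
    then have "F w \<le> 1" using blinfun_le[of F w] nF by simp
    moreover have "F w = A u + B v" by (simp add: w_def Aa Ba blinfun.add_right)
    ultimately show False using u(2) v(2) unfolding e_def by (rule arith_aux)
  qed
  have nAB: "norm A + norm B = 1" using ge le by simp
  show ?thesis
  proof (cases "norm A = 0")
    case True
    then have "A = 0" by simp
    then have "F (mulC h u) = 0 * F u" for u using Aa[of u] by simp
    then show ?thesis by blast
  next
    case nA0: False
    show ?thesis
    proof (cases "norm B = 0")
      case True
      then have "B = 0" by simp
      then have "F (mulC h u) = 1 * F u" for u
        using Aa[of u] Ba[of u] FAB by (simp add: blinfun.add_left)
      then show ?thesis by blast
    next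
      case False
      define a where "a = norm A"
      have "0 < norm B" using False by (simp add: less_le)
      moreover have "0 < norm A" using nA0 by (simp add: less_le)
      ultimately have a: "0 < a" "a < 1" using nAB a_def by linarith+
      define P where "P = (1/a) *\<^sub>R A"
      define Q where "Q = (1/(1-a)) *\<^sub>R B"
      have "norm P \<le> 1" using a by (simp add: P_def a_def)
      moreover have "norm Q \<le> 1" using a nAB by (simp add: Q_def a_def)
      moreover have "F = a *\<^sub>R P + (1-a) *\<^sub>R Q" using a FAB by (simp add: P_def Q_def)
      ultimately have "P = F" using E a unfolding extremeC_def by blast
      then have "F u = blinfun_apply ((1/a) *\<^sub>R A) u" for u unfolding P_def by simp
      then have "F u = (1/a) * A u" for u by (simp add: blinfun.scaleR_left)
      then have Fu: "F u = A u / a" for u by simp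
      have "F (mulC h u) = a * F u" for u
      proof -
        have "F (mulC h u) = A u" by (rule Aa[symmetric])
        also have "\<dots> = a * F u" using Fu[of u] a by simp
        finally show ?thesis .
      qed
      then show ?thesis by blast
    qed
  qed
qed

lemma split_all:
  fixes F :: "('k::topological_space \<Rightarrow>\<^sub>C real) \<Rightarrow>\<^sub>L real"
  assumes K: "compact (UNIV::'k set)" and nF: "norm F = 1" and E: "extremeC F"
  shows "\<exists>c. \<forall>u. F (mulC h u) = c * F u"
proof -
  define M where "M = norm h + 1"
  have M: "0 < M" by (simp add: M_def add_nonneg_pos)
  define h1 where "h1 = (mkC (\<lambda>x. (h x + M) * (1 / (2*M))) :: 'k \<Rightarrow>\<^sub>C real)"
  have h1a: "apply_bcontfun h1 = (\<lambda>x. (h x + M) * (1 / (2*M)))"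
    unfolding h1_def by (rule mkC_apply[OF K]) (intro continuous_intros continuous_on_apply_bcontfun)
  have hb: "\<bar>h x\<bar> < M" for x using norm_bounded[of h x] by (simp add: M_def)
  have "0 \<le> h1 x" for x using hb[of x] M by (simp add: h1a)
  moreover have "h1 x \<le> 1" for x using hb[of x] M by (simp add: h1a field_simps)
  ultimately obtain c1 where c1: "\<And>u. F (mulC h1 u) = c1 * F u"
    using split_unit[OF K nF E, of h1] by blast
  have eq: "mulC h u = (2*M) *\<^sub>R mulC h1 u - M *\<^sub>R u" for u
    by (rule bcontfun_eqI) (use M in \<open>simp add: mulC_apply[OF K] h1a field_simps\<close>)
  have "F (mulC h u) = (2*M*c1 - M) * F u" for u
    by (simp add: eq blinfun.diff_right blinfun.scaleR_right c1 algebra_simps)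
  then show ?thesis by blast
qed

lemma apply_sum_bcontfun:
  "finite J \<Longrightarrow> apply_bcontfun (\<Sum>k\<in>J. f k :: 'k::topological_space \<Rightarrow>\<^sub>C real) x = (\<Sum>k\<in>J. apply_bcontfun (f k) x)"
  by (induction J rule: finite_induct) auto

lemma character:
  fixes \<phi> :: "('k::topological_space \<Rightarrow>\<^sub>C real) \<Rightarrow> real"
  assumes K: "compact (UNIV::'k set)"
    and add: "\<And>g h. \<phi> (g + h) = \<phi> g + \<phi> h"
    and sc: "\<And>c g. \<phi> (c *\<^sub>R g) = c * \<phi> g"
    and mult: "\<And>g h. \<phi> (mulC g h) = \<phi> g * \<phi> h"
    and one: "\<phi> oneC = 1"
  shows "\<exists>k. \<forall>g. \<phi> g = apply_bcontfun g k"
proof (rule ccontr)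
  assume "\<not> ?thesis"
  then have "\<forall>k. \<exists>g. \<phi> g \<noteq> apply_bcontfun g k" by auto
  then obtain G where G: "\<And>k. \<phi> (G k) \<noteq> apply_bcontfun (G k) k" by metis
  define H where "H k = G k - \<phi> (G k) *\<^sub>R oneC" for k
  have diff: "\<phi> (g - h) = \<phi> g - \<phi> h" for g h
    using add[of "g - h" h] by simp
  have Hk: "apply_bcontfun (H k) k \<noteq> 0" "\<phi> (H k) = 0" for k
    using G[of k] by (auto simp: H_def diff sc one)
  have cov: "UNIV \<subseteq> (\<Union>k\<in>UNIV. {x. apply_bcontfun (H k) x \<noteq> 0})" using Hk by auto
  have opn: "open {x. apply_bcontfun (H k) x \<noteq> 0}" for k
    by (rule open_Collect_neq) (auto intro: continuous_intros)
  obtain J where J: "finite J" "UNIV \<subseteq> (\<Union>k\<in>J. {x. apply_bcontfun (H k) x \<noteq> 0})"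
  proof (rule compactE_image[OF K, of UNIV "\<lambda>k. {x. apply_bcontfun (H k) x \<noteq> 0}"])
    show "open {x. apply_bcontfun (H k) x \<noteq> 0}" if "k \<in> UNIV" for k by (rule opn)
    show "UNIV \<subseteq> (\<Union>k\<in>UNIV. {x. apply_bcontfun (H k) x \<noteq> 0})" by (rule cov)
  next
    fix C' assume c1: "finite C'" and c2: "UNIV \<subseteq> (\<Union>k\<in>C'. {x. apply_bcontfun (H k) x \<noteq> 0})"
    show thesis by (rule that[OF c1 c2])
  qed
  define s where "s = (\<Sum>k\<in>J. mulC (H k) (H k))"
  have sa: "apply_bcontfun s x = (\<Sum>k\<in>J. (H k x)^2)" for x
    by (simp add: s_def apply_sum_bcontfun[OF J(1)] mulC_apply[OF K] power2_eq_square)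
  have spos: "0 < apply_bcontfun s x" for x
  proof -
    obtain k where "k \<in> J" "H k x \<noteq> 0" using J(2) by blast
    then show ?thesis unfolding sa by (intro sum_pos2[OF J(1)]) auto
  qed
  have phi0: "\<phi> 0 = 0" using sc[of 0 0] by simp
  have "\<phi> (\<Sum>k\<in>J'. mulC (H k) (H k)) = 0" if "finite J'" for J'
    using that by (induction J' rule: finite_induct) (auto simp: phi0 add mult Hk)
  then have s0: "\<phi> s = 0" using J(1) by (simp add: s_def)
  define r where "r = (mkC (\<lambda>x. 1 / s x) :: 'k \<Rightarrow>\<^sub>C real)"
  have ra: "apply_bcontfun r = (\<lambda>x. 1 / s x)"
    unfolding r_def using spos
    by (intro mkC_apply[OF K] continuous_intros continuous_on_apply_bcontfun) (auto simp: less_le)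
  have "mulC s r = oneC"
    by (rule bcontfun_eqI) (use spos in \<open>simp add: mulC_apply[OF K] ra less_le\<close>)
  then have "\<phi> oneC = \<phi> s * \<phi> r" using mult by metis
  then show False using s0 one by simp
qed


lemma extreme_is_eval:
  fixes F :: "('k::topological_space \<Rightarrow>\<^sub>C real) \<Rightarrow>\<^sub>L real"
  assumes K: "compact (UNIV::'k set)" and nF: "norm F = 1" and E: "extremeC F"
  shows "\<exists>k c. \<bar>c\<bar> = 1 \<and> (\<forall>w. F w = c * apply_bcontfun w k)"
proof -
  have "F \<noteq> 0" using nF by auto
  then obtain u0 where u0: "F u0 \<noteq> 0"
    by (metis blinfun_eqI zero_blinfun.rep_eq)
  define \<phi> where "\<phi> h = F (mulC h u0) / F u0" for h
  have key: "F (mulC h u) = \<phi> h * F u" for h u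
  proof -
    obtain c where c: "\<And>u. F (mulC h u) = c * F u" using split_all[OF K nF E, of h] by blast
    have "\<phi> h = c" using u0 by (simp add: \<phi>_def c)
    then show ?thesis by (simp add: c)
  qed
  have add: "\<phi> (g + h) = \<phi> g + \<phi> h" for g h
  proof -
    have "mulC (g + h) u0 = mulC g u0 + mulC h u0"
      by (rule bcontfun_eqI) (simp add: mulC_apply[OF K] algebra_simps)
    then show ?thesis by (simp add: \<phi>_def blinfun.add_right add_divide_distrib)
  qed
  have sc: "\<phi> (c *\<^sub>R g) = c * \<phi> g" for c g
  proof -
    have "mulC (c *\<^sub>R g) u0 = c *\<^sub>R mulC g u0"
      by (rule bcontfun_eqI) (simp add: mulC_apply[OF K] algebra_simps)
    then show ?thesis by (simp add: \<phi>_def blinfun.scaleR_right)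
  qed
  have mult: "\<phi> (mulC g h) = \<phi> g * \<phi> h" for g h
  proof -
    have "mulC (mulC g h) u0 = mulC g (mulC h u0)"
      by (rule bcontfun_eqI) (simp add: mulC_apply[OF K] algebra_simps)
    then have "\<phi> (mulC g h) = F (mulC g (mulC h u0)) / F u0" by (simp add: \<phi>_def)
    also have "\<dots> = \<phi> g * F (mulC h u0) / F u0" by (simp add: key)
    also have "\<dots> = \<phi> g * \<phi> h" by (simp add: \<phi>_def)
    finally show ?thesis .
  qed
  have "mulC oneC u0 = u0"
    by (rule bcontfun_eqI) (simp add: mulC_apply[OF K])
  then have one: "\<phi> oneC = 1" using u0 by (simp add: \<phi>_def)
  obtain k where k: "\<And>g. \<phi> g = apply_bcontfun g k"
    using character[OF K add sc mult one] by blast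
  define c where "c = F oneC"
  have Fw: "F w = c * apply_bcontfun w k" for w
  proof -
    have "mulC w oneC = w"
      by (rule bcontfun_eqI) (simp add: mulC_apply[OF K])
    then have "F w = F (mulC w oneC)" by simp
    also have "\<dots> = \<phi> w * c" by (simp add: key c_def)
    finally show ?thesis by (simp add: k)
  qed
  have c1: "\<bar>c\<bar> \<le> 1" using abs_blinfun_le[of F oneC] nF by (simp add: c_def)
  have "norm F \<le> \<bar>c\<bar>"
  proof (rule norm_blinfun_bound)
    fix w
    show "norm (F w) \<le> \<bar>c\<bar> * norm w"
      using norm_bounded[of w k] by (simp add: Fw abs_mult mult_left_mono)
  qed simp
  then have "\<bar>c\<bar> = 1" using c1 nF by simp
  then show ?thesis using Fw by blast
qed

lemma extreme_neg:
  fixes f :: "'b::real_normed_vector"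
  assumes "f extreme_point_of cball 0 1"
  shows "(-f) extreme_point_of cball 0 1"
  unfolding extreme_point_of_def
proof (intro conjI ballI)
  show "-f \<in> cball 0 1" using assms by (simp add: extreme_point_of_def)
  fix a b :: 'b assume ab: "a \<in> cball 0 1" "b \<in> cball 0 1"
  show "-f \<notin> open_segment a b"
  proof
    assume "-f \<in> open_segment a b"
    then obtain u where "a \<noteq> b" "0 < u" "u < 1" "-f = (1 - u) *\<^sub>R a + u *\<^sub>R b"
      by (auto simp: in_segment)
    then have "f \<in> open_segment (-a) (-b)"
      by (auto simp: in_segment intro!: exI[of _ u]) (simp add: algebra_simps)
    moreover have "-a \<in> cball 0 1" "-b \<in> cball 0 1" using ab by auto
    ultimately show False using assms by (auto simp: extreme_point_of_def)
  qed
qed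

lemma extreme_norm1:
  fixes f g :: "'b::real_normed_vector"
  assumes g: "g \<noteq> 0" and f: "f extreme_point_of cball 0 1"
  shows "norm f = 1"
proof -
  have nf: "norm f \<le> 1" using f by (simp add: extreme_point_of_def)
  have ext: "f \<notin> open_segment a b" if "norm a \<le> 1" "norm b \<le> 1" for a b
    using f that by (simp add: extreme_point_of_def)
  show ?thesis
  proof (rule ccontr)
    assume "norm f \<noteq> 1"
    then have lt: "norm f < 1" using nf by simp
    show False
    proof (cases "f = 0")
      case True
      define g' where "g' = g /\<^sub>R norm g"
      have ng: "norm g' = 1" using g by (simp add: g'_def)
      then have g0: "g' \<noteq> 0" by auto
      have "-g' \<noteq> g'"
      proof
        assume "-g' = g'"
        then have "g' + g' = 0" by (metis eq_neg_iff_add_eq_0)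
        then have "2 *\<^sub>R g' = 0" by (simp add: scaleR_2)
        then show False using g0 by simp
      qed
      moreover have "f = (1 - 1/2) *\<^sub>R (-g') + (1/2) *\<^sub>R g'" using True by (simp add: algebra_simps)
      ultimately have "f \<in> open_segment (-g') g'" unfolding in_segment by (intro conjI exI[of _ "1/2"]) auto
      then show False using ext[of "-g'" g'] ng by simp
    next
      case False
      then have pos: "0 < norm f" by simp
      have "(0::'b) \<noteq> f /\<^sub>R norm f" using False by simp
      moreover have "f = (1 - norm f) *\<^sub>R 0 + norm f *\<^sub>R (f /\<^sub>R norm f)" using pos by simp
      ultimately have "f \<in> open_segment 0 (f /\<^sub>R norm f)" unfolding in_segment
        using pos lt by (intro conjI exI[of _ "norm f"]) auto
      then show False using ext[of 0 "f /\<^sub>R norm f"] False by simp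
    qed
  qed
qed

definition evC :: "'k::topological_space \<Rightarrow> (('k \<Rightarrow>\<^sub>C real) \<Rightarrow>\<^sub>L real)" where
  "evC k = Blinfun (\<lambda>u. apply_bcontfun u k)"

lemma bl_evC: "bounded_linear (\<lambda>u::'k::topological_space \<Rightarrow>\<^sub>C real. apply_bcontfun u k)"
proof (rule bounded_linear_intro[where K=1])
  fix u :: "'k \<Rightarrow>\<^sub>C real"
  show "norm (apply_bcontfun u k) \<le> norm u * 1" using norm_bounded[of u k] by simp
qed auto

lemma evC_apply[simp]: "blinfun_apply (evC k) u = apply_bcontfun u k"
  unfolding evC_def by (simp add: bounded_linear_Blinfun_apply[OF bl_evC])

lemma norm_evC[simp]: "norm (evC k) = 1"
proof (rule antisym)
  show "norm (evC k) \<le> 1"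
  proof (rule norm_blinfun_bound)
    fix u :: "'a \<Rightarrow>\<^sub>C real"
    show "norm (evC k u) \<le> 1 * norm u" using norm_bounded[of u k] by simp
  qed simp
  show "1 \<le> norm (evC k)" using blinfun_le[of "evC k" oneC] by simp
qed

locale uemb =
  fixes T :: "'a::banach \<Rightarrow> ('k::t2_space \<Rightarrow>\<^sub>C real)"
  assumes U: "U_embedding T" and K: "compact (UNIV::'k set)"
begin

lemma lin: "linear T" and iso: "norm (T x) = norm x"
  using U by (auto simp: U_embedding_def)

lemma blT: "bounded_linear T"
  using lin iso unfolding bounded_linear_def bounded_linear_axioms_def
  by (metis mult.right_neutral order_refl)

definition pull :: "(('k \<Rightarrow>\<^sub>C real) \<Rightarrow>\<^sub>L real) \<Rightarrow> ('a \<Rightarrow>\<^sub>L real)" where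
  "pull P = Blinfun (\<lambda>x. P (T x))"

lemma pull_apply[simp]: "blinfun_apply (pull P) x = P (T x)"
  unfolding pull_def
  by (simp add: bounded_linear_Blinfun_apply[OF bounded_linear_compose[OF blinfun.bounded_linear_right blT]])

lemma norm_pull: "norm (pull P) \<le> norm P"
proof (rule norm_blinfun_bound)
  fix x show "norm (pull P x) \<le> norm P * norm x"
    using norm_blinfun[of P "T x"] by (simp add: iso)
qed simp

lemma pull_eq_iff: "pull P = f \<longleftrightarrow> (\<forall>x. P (T x) = f x)"
  by (auto intro!: blinfun_eqI)

lemma ext: "\<exists>P. pull P = f \<and> norm P = norm f"
  using U unfolding U_embedding_def pull_eq_iff by blast

lemma uniq: "pull P = f \<Longrightarrow> norm P = norm f \<Longrightarrow> pull Q = f \<Longrightarrow> norm Q = norm f \<Longrightarrow> P = Q"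
  using U unfolding U_embedding_def pull_eq_iff by blast

lemma pull_add: "pull (P + Q) = pull P + pull Q"
  by (rule blinfun_eqI) (simp add: blinfun.add_left del: pull_apply add: pull_apply)

lemma pull_scale: "pull (c *\<^sub>R P) = c *\<^sub>R pull P"
  by (rule blinfun_eqI) (simp add: blinfun.scaleR_left)

lemma pull_neg: "pull (- P) = - pull P"
  by (rule blinfun_eqI) (simp add: blinfun.minus_left)


lemma extremeC_of_pull:
  assumes f: "f extreme_point_of cball 0 1" and nf: "norm f = 1"
    and F: "pull F = f" "norm F = 1"
  shows "extremeC F"
  unfolding extremeC_def
proof (intro allI impI)
  fix P Q :: "('k \<Rightarrow>\<^sub>C real) \<Rightarrow>\<^sub>L real" and a :: real
  assume a: "0 < a" "a < 1" and P: "norm P \<le> 1" and Q: "norm Q \<le> 1"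
    and FPQ: "F = a *\<^sub>R P + (1 - a) *\<^sub>R Q"
  have np: "norm (pull P) \<le> 1" using norm_pull[of P] P by simp
  have nq: "norm (pull Q) \<le> 1" using norm_pull[of Q] Q by simp
  have "f = a *\<^sub>R pull P + (1 - a) *\<^sub>R pull Q"
    using F(1) unfolding FPQ pull_add pull_scale by simp
  then have fpq: "f = (1 - a) *\<^sub>R pull Q + a *\<^sub>R pull P" by (simp add: add.commute)
  have "pull Q = pull P"
  proof (rule ccontr)
    assume "pull Q \<noteq> pull P"
    then have "f \<in> open_segment (pull Q) (pull P)" unfolding in_segment
      using a fpq by blast
    then show False using f np nq by (auto simp: extreme_point_of_def)
  qed
  then have pf: "pull P = f" using fpq by (simp add: algebra_simps flip: scaleR_add_left)
  then have "1 \<le> norm P" using norm_pull[of P] nf by simp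
  then have "norm P = norm f" using P nf by simp
  then show "P = F" using uniq[OF pf _ F(1)] F(2) nf by simp
qed

lemma ext_subset:
  assumes f: "f extreme_point_of cball 0 1" and nf: "norm f = 1"
  shows "\<exists>k. f = pull (evC k) \<or> f = - pull (evC k)"
proof -
  obtain F where F: "pull F = f" "norm F = norm f" using ext by blast
  then have F1: "norm F = 1" using nf by simp
  have "extremeC F" by (rule extremeC_of_pull[OF f nf F(1) F1])
  then obtain k c where c: "\<bar>c\<bar> = 1" "\<And>w. F w = c * apply_bcontfun w k"
    using extreme_is_eval[OF K F1] by blast
  have "F = c *\<^sub>R evC k" by (rule blinfun_eqI) (simp add: c(2) blinfun.scaleR_left)
  then have "f = c *\<^sub>R pull (evC k)" using F(1) by (simp add: pull_scale)
  moreover have "c = 1 \<or> c = -1" using c(1) by linarith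
  ultimately show ?thesis by auto
qed

lemma exists_eval_extreme:
  assumes nontriv: "\<exists>x::'a. x \<noteq> 0"
  shows "\<exists>k. norm (pull (evC k)) = 1 \<and> pull (evC k) extreme_point_of cball 0 1"
proof -
  obtain x :: 'a where "x \<noteq> 0" using nontriv by blast
  define x1 where "x1 = x /\<^sub>R norm x"
  have nx1: "norm x1 = 1" using \<open>x \<noteq> 0\<close> by (simp add: x1_def)
  obtain k where k: "\<And>y. \<bar>T x1 y\<bar> \<le> \<bar>T x1 k\<bar>"
    using continuous_attains_sup[OF K, of "\<lambda>y. \<bar>T x1 y\<bar>"]
    by (auto intro: continuous_intros continuous_on_apply_bcontfun)
  have "norm (T x1) \<le> \<bar>T x1 k\<bar>" by (rule norm_bound) (simp add: k)
  then have Tk: "1 \<le> \<bar>T x1 k\<bar>" using iso[of x1] nx1 by simp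
  define f0 where "f0 = pull (evC k)"
  have le1: "norm f0 \<le> 1" using norm_pull[of "evC k"] by (simp add: f0_def)
  have "\<bar>f0 x1\<bar> \<le> norm f0" using abs_blinfun_le[of f0 x1] nx1 by simp
  then have nf0: "norm f0 = 1" using Tk le1 by (simp add: f0_def)
  have "f0 extreme_point_of cball 0 1"
    unfolding extreme_point_of_def
  proof (intro conjI ballI)
    show "f0 \<in> cball 0 1" using nf0 by simp
    fix a b :: "'a \<Rightarrow>\<^sub>L real" assume ab: "a \<in> cball 0 1" "b \<in> cball 0 1"
    show "f0 \<notin> open_segment a b"
    proof
      assume "f0 \<in> open_segment a b"
      then obtain u where uab: "a \<noteq> b" "0 < u" "u < 1" and f0ab: "f0 = (1 - u) *\<^sub>R a + u *\<^sub>R b"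
        by (auto simp: in_segment)
      obtain G where G: "pull G = a" "norm G = norm a" using ext by blast
      obtain H where H: "pull H = b" "norm H = norm b" using ext by blast
      have nG: "norm G \<le> 1" and nH: "norm H \<le> 1" using G H ab by auto
      define M where "M = (1 - u) *\<^sub>R G + u *\<^sub>R H"
      have pM: "pull M = f0" by (simp add: M_def pull_add pull_scale G H f0ab)
      have "norm M \<le> (1 - u) * norm G + u * norm H"
        unfolding M_def using uab norm_triangle_ineq[of "(1 - u) *\<^sub>R G" "u *\<^sub>R H"]
        by simp
      also have "\<dots> \<le> (1 - u) * 1 + u * 1"
        using nG nH uab by (intro add_mono mult_left_mono) auto
      finally have "norm M \<le> 1" by simp
      moreover have "1 \<le> norm M" using norm_pull[of M] pM nf0 by simp
      ultimately have nM: "norm M = norm f0" using nf0 by simp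
      have pE: "pull (evC k) = f0" by (simp add: f0_def)
      have ME: "M = evC k" using uniq[OF pM nM pE] nf0 by simp
      have eqG: "apply_bcontfun w k = (1 - u) * G w + u * H w" for w
        using ME by (metis M_def blinfun.add_left blinfun.scaleR_left evC_apply real_scaleR_def)
      have eqH: "apply_bcontfun w k = (1 - (1 - u)) * H w + (1 - u) * G w" for w
        using eqG[of w] by simp
      have "G w = apply_bcontfun w k" for w
        by (rule ev_extreme[OF K nG nH uab(2,3) eqG])
      then have "G = evC k" by (intro blinfun_eqI) simp
      moreover have "H w = apply_bcontfun w k" for w
        by (rule ev_extreme[OF K nH nG _ _ eqH]) (use uab in auto)
      then have "H = evC k" by (intro blinfun_eqI) simp
      ultimately have "a = b" using G H by simp
      then show False using uab by simp
    qed
  qed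
  then show ?thesis using nf0 f0_def by blast
qed

lemma cont_eval:
  "continuous_map euclidean weak_star_topology (\<lambda>k. c *\<^sub>R pull (evC k))"
  unfolding weak_star_topology_def
proof (rule continuous_map_pullback')
  show "topspace euclidean \<subseteq> (\<lambda>k. c *\<^sub>R pull (evC k)) -` UNIV" by simp
  show "continuous_map euclidean (product_topology (\<lambda>_. euclideanreal) UNIV)
          (blinfun_apply \<circ> (\<lambda>k. c *\<^sub>R pull (evC k)))"
    unfolding continuous_map_componentwise_UNIV
  proof
    fix x
    show "continuous_map euclidean euclideanreal (\<lambda>k. (blinfun_apply \<circ> (\<lambda>k. c *\<^sub>R pull (evC k))) k x)"
      by (simp add: blinfun.scaleR_left continuous_intros continuous_on_apply_bcontfun)
  qed
qed

lemma Hausdorff_weak: "Hausdorff_space (weak_star_topology :: ('a \<Rightarrow>\<^sub>L real) topology)"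
  unfolding Hausdorff_space_def
proof (intro allI impI)
  fix f g :: "'a \<Rightarrow>\<^sub>L real"
  assume "f \<in> topspace weak_star_topology \<and> g \<in> topspace weak_star_topology \<and> f \<noteq> g"
  then have "blinfun_apply f \<noteq> blinfun_apply g" by (metis blinfun_apply_inject)
  moreover have "Hausdorff_space (product_topology (\<lambda>_::'a. euclideanreal) UNIV)"
    by (simp add: Hausdorff_space_product_topology)
  ultimately obtain U V where UV: "openin (product_topology (\<lambda>_::'a. euclideanreal) UNIV) U"
    "openin (product_topology (\<lambda>_::'a. euclideanreal) UNIV) V"
    "blinfun_apply f \<in> U" "blinfun_apply g \<in> V" "disjnt U V"
    unfolding Hausdorff_space_def by force
  show "\<exists>U V. openin weak_star_topology U \<and> openin weak_star_topology V \<and> f \<in> U \<and> g \<in> V \<and> disjnt U V"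
  proof (intro exI conjI)
    show "openin weak_star_topology (blinfun_apply -` U \<inter> UNIV)"
      unfolding weak_star_topology_def openin_pullback_topology using UV(1) by blast
    show "openin weak_star_topology (blinfun_apply -` V \<inter> UNIV)"
      unfolding weak_star_topology_def openin_pullback_topology using UV(2) by blast
    show "f \<in> blinfun_apply -` U \<inter> UNIV" "g \<in> blinfun_apply -` V \<inter> UNIV" using UV by auto
    show "disjnt (blinfun_apply -` U \<inter> UNIV) (blinfun_apply -` V \<inter> UNIV)"
      using UV(5) by (auto simp: disjnt_def)
  qed
qed

lemma closed_eval: "closedin weak_star_topology (range (\<lambda>k. c *\<^sub>R pull (evC k)))"
proof (rule compactin_imp_closedin[OF Hausdorff_weak])
  show "compactin weak_star_topology (range (\<lambda>k. c *\<^sub>R pull (evC k)))"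
    by (rule image_compactin[OF _ cont_eval]) (simp add: K)
qed

end

lemma topspace_weak: "topspace (weak_star_topology :: ('a::real_normed_vector \<Rightarrow>\<^sub>L real) topology) = UNIV"
  unfolding weak_star_topology_def topspace_pullback_topology by simp

theorem corollary5p1:
  fixes T :: "'a::banach \<Rightarrow> ('k::t2_space \<Rightarrow>\<^sub>C real)"
  assumes nontriv: "\<exists>x::'a. x \<noteq> 0"
    and conn: "connectedin (weak_star_topology :: ('a \<Rightarrow>\<^sub>L real) topology)
                 ((weak_star_topology closure_of
                     {f :: 'a \<Rightarrow>\<^sub>L real. f extreme_point_of cball 0 1})
                  \<inter> sphere 0 1)"
    and K_compact: "compact (UNIV :: 'k set)"
  shows "\<not> U_embedding T"
proof
  assume U: "U_embedding T"
  interpret uemb T by unfold_locales (rule U, rule K_compact)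
  define Ext where "Ext = {f :: 'a \<Rightarrow>\<^sub>L real. f extreme_point_of cball 0 1}"
  define S where "S = (weak_star_topology closure_of Ext) \<inter> sphere 0 1"
  define A where "A = range (\<lambda>k. (1::real) *\<^sub>R pull (evC k))"
  define B where "B = range (\<lambda>k. (-1::real) *\<^sub>R pull (evC k))"
  obtain k0 where k0: "norm (pull (evC k0)) = 1" "pull (evC k0) extreme_point_of cball 0 1"
    using exists_eval_extreme[OF nontriv] by blast
  have g0: "pull (evC k0) \<noteq> 0" using k0 by auto
  have cA: "closedin weak_star_topology A" unfolding A_def by (rule closed_eval)
  have cB: "closedin weak_star_topology B" unfolding B_def by (rule closed_eval)
  have ExtAB: "Ext \<subseteq> A \<union> B"
  proof
    fix f assume "f \<in> Ext"
    then have fe: "f extreme_point_of cball 0 1" by (simp add: Ext_def)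
    then have "norm f = 1" by (rule extreme_norm1[OF g0])
    then obtain k where "f = pull (evC k) \<or> f = - pull (evC k)" using ext_subset[OF fe] by blast
    then show "f \<in> A \<union> B" unfolding A_def B_def by auto
  qed
  have SAB: "S \<subseteq> A \<union> B"
    unfolding S_def using closure_of_minimal[OF ExtAB closedin_Un[OF cA cB]] by blast
  have disj: "A \<inter> B \<inter> S = {}"
  proof (rule ccontr)
    assume "A \<inter> B \<inter> S \<noteq> {}"
    then obtain f where "f \<in> A" "f \<in> B" and fS: "f \<in> S" by blast
    from \<open>f \<in> A\<close> obtain k where fk': "f = (1::real) *\<^sub>R pull (evC k)" unfolding A_def by blast
    from \<open>f \<in> B\<close> obtain j where fj': "f = (-1::real) *\<^sub>R pull (evC j)" unfolding B_def by blast
    have fk: "pull (evC k) = f" using fk' by simp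
    have fj: "pull (- evC j) = f" using fj' by (simp add: pull_neg)
    have nf: "norm f = 1" using fS by (simp add: S_def)
    have "evC k = - evC j"
      by (rule uniq[of "evC k" f "- evC j"]) (use fk fj nf in simp_all)
    then have "evC k oneC = (- evC j) oneC" by simp
    then show False by (simp add: blinfun.minus_left)
  qed
  have inS: "f \<in> S" if "f extreme_point_of cball 0 1" "norm f = 1" for f
  proof -
    have "f \<in> Ext" using that by (simp add: Ext_def)
    then have "f \<in> weak_star_topology closure_of Ext"
      using closure_of_subset[of Ext weak_star_topology] by (auto simp: topspace_weak)
    then show ?thesis using that by (simp add: S_def)
  qed
  have "pull (evC k0) \<in> A \<inter> S" using inS[OF k0(2) k0(1)] by (auto simp: A_def)
  then have AS: "A \<inter> S \<noteq> {}" by blast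
  have "- pull (evC k0) \<in> B \<inter> S" using inS[OF extreme_neg[OF k0(2)]] k0(1) by (auto simp: B_def)
  then have BS: "B \<inter> S \<noteq> {}" by blast
  have "connectedin weak_star_topology S" using conn by (simp add: S_def Ext_def)
  then show False
    unfolding connectedin_closedin using cA cB SAB disj AS BS by blast
qed

end
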